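(* Let $T>0$, $r>0$, $\sigma>0$, $q_S,\gamma_S\in\mathbb{R}$, $\lambda_B,\lambda_C\ge0$, $R_B,R_C\in[0,1]$ and $s_F\ge 0$. Let $H:(0,\infty)\to[0,\infty)$ be a non-negative, locally bounded payoff function with at most linear growth at infinity, and let $V$ be the risk-free Black-Scholes price, i.e. the solution of $$\frac{\partial V}{\partial t}+\mathcal{A}V-rV=0 \text{ in } (0,T)\times(0,\infty),\qquad V(T,S)=H(S),$$ where $\mathcal{A}=\frac12\sigma^2S^2\frac{\partial^2}{\partial S^2}+(q_S-\gamma_S)S\frac{\partial}{\partial S}$. Consider the semilinear final value problem $$\frac{\partial U}{\partial t}+\mathcal{A}U-rU=-(1-R_B)\lambda_BU^-+(1-R_C)\lambda_CU^++s_FU^+ \text{ in }(0,T)\times(0,\infty),\qquad U(T,S)=H(S),$$ where $\varphi^+=\max(\varphi,0)$ and $\varphi^-=\max(-\varphi,0)$, whose solution is the limit of the monotone iteration scheme with sub- and supersolutions. Then this solution $U$ is non-negative and is given by $$U(t,S)=\mathrm{e}^{-((1-R_C)\lambda_C+s_F)(T-t)}\,V(t,S).$$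
   Context: Here $V$ is the classical risk-free price (e.g. $V(t,S)=\mathrm{e}^{-r(T-t)}\int_{\mathbb{R}}H\big(S\mathrm{e}^{(q_S-\gamma_S-\sigma^2/2)(T-t)+\sigma\sqrt{T-t}\,z}\big)\frac{\mathrm{e}^{-z^2/2}}{\sqrt{2\pi}}\,\mathrm{d}z$). The parameters $\lambda_B,\lambda_C$ are default intensities, $R_B,R_C$ recovery rates, $s_F$ a funding spread; this PDE models the adjusted price when the mark-to-market value at default is the adjusted price $U$ itself. In time-to-maturity $\tau=T-t$ and $x=\ln S$, with $u(\tau,x)=U(t,S)$, the problem is equivalent to $u_\tau-\frac12\sigma^2u_{xx}-\rho u_x+(r+c_M)u=g(u)$, $u(0,x)=H(\mathrm{e}^x)$, with $\rho=q_S-\gamma_S-\frac12\sigma^2$, $g(u)=(1-R_B)\lambda_Bu^--(1-R_C)\lambda_Cu^+-s_Fu^++c_Mu$ and $c_M\ge\max\{(1-R_B)\lambda_B,(1-R_C)\lambda_C+s_F\}$, so that $g$ is nondecreasing; the solution is the common limit of the increasing sequence of subsolutions and decreasing sequence of supersolutions obtained by solving $\partial_\tau u_{n+1}-\frac12\sigma^2\partial_x^2u_{n+1}-\rho\partial_xu_{n+1}+(r+c_M)u_{n+1}=g(u_n)$, $u_{n+1}(0,x)=H(\mathrm{e}^x)$. *)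

theory Defs
  imports "HOL-Analysis.Analysis"
begin

definition std_normal_density :: "real \<Rightarrow> real" where
  "std_normal_density z = exp (- (z^2) / 2) / sqrt (2 * pi)"

definition bs_price ::
  "real \<Rightarrow> real \<Rightarrow> real \<Rightarrow> real \<Rightarrow> real \<Rightarrow> (real \<Rightarrow> real) \<Rightarrow> real \<Rightarrow> real \<Rightarrow> real" where
  "bs_price T r \<sigma> qS \<gamma>S H t S =
     exp (- r * (T - t)) *
     (LINT z|lborel. H (S * exp ((qS - \<gamma>S - \<sigma>^2/2) * (T - t) + \<sigma> * sqrt (T - t) * z))
                      * std_normal_density z)"

text \<open>Transition operator of the linear part in log-variables (time to maturity tau, x = ln S):
  solution operator of  u_tau = (1/2) sigma^2 u_xx + rho u_x.\<close>
definition heat_op :: "real \<Rightarrow> real \<Rightarrow> real \<Rightarrow> (real \<Rightarrow> real) \<Rightarrow> real \<Rightarrow> real" where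
  "heat_op \<sigma> \<rho> \<tau> f x =
     (LINT z|lborel. f (x + \<rho> * \<tau> + \<sigma> * sqrt \<tau> * z) * std_normal_density z)"

definition xva_g :: "real \<Rightarrow> real \<Rightarrow> real \<Rightarrow> real \<Rightarrow> real \<Rightarrow> real \<Rightarrow> real \<Rightarrow> real" where
  "xva_g RB lamB RC lamC sF cM u =
     (1 - RB) * lamB * max (- u) 0 - (1 - RC) * lamC * max u 0 - sF * max u 0 + cM * u"

text \<open>Solution of  u_tau - (1/2)sigma^2 u_xx - rho u_x + (r+cM) u = G(u),  u(0,x) = h(x),
  on [0,T] in the Duhamel (variation of constants) sense -- each step of the monotone
  iteration solves the linear problem with source G(u_n), whose solution is given by this
  formula; the limit of the iteration is therefore a fixed point of this map.\<close>
definition mild_solution ::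
  "real \<Rightarrow> real \<Rightarrow> real \<Rightarrow> real \<Rightarrow> real \<Rightarrow> (real \<Rightarrow> real) \<Rightarrow> (real \<Rightarrow> real)
   \<Rightarrow> (real \<Rightarrow> real \<Rightarrow> real) \<Rightarrow> bool" where
  "mild_solution T r \<sigma> \<rho> cM G h u \<longleftrightarrow>
     (\<forall>\<tau>\<in>{0..T}. \<forall>x. u \<tau> x =
        exp (- (r + cM) * \<tau>) * heat_op \<sigma> \<rho> \<tau> h x
        + (LINT s:{0..\<tau>}|lborel.
             exp (- (r + cM) * (\<tau> - s)) * heat_op \<sigma> \<rho> (\<tau> - s) (\<lambda>y. G (u s y)) x))"

end

theory Submission
  imports Defs "HOL-Probability.Distributions"
begin

lemma phi_eq: "Defs.std_normal_density z = normal_density 0 1 z"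
  unfolding Defs.std_normal_density_def normal_density_def by simp

lemma phi_meas[measurable]: "Defs.std_normal_density \<in> borel_measurable borel"
  unfolding Defs.std_normal_density_def by measurable

lemma expmom:
  "has_bochner_integral lborel (\<lambda>z. exp (s*z) * Defs.std_normal_density z) (exp (s^2/2))"
proof -
  have eq: "exp (s*z) * Defs.std_normal_density z = exp (s^2/2) * normal_density s 1 z" for z
  proof -
    have "- ((z - s)^2) / 2 + s^2/2 = s*z + (- (z^2)/2)" by (simp add: power2_eq_square field_simps)
    then have "exp (s^2/2) * exp (- ((z - s)^2) / 2) = exp (s*z) * exp (- (z^2)/2)"
      by (metis exp_add mult.commute)
    then show ?thesis unfolding Defs.std_normal_density_def normal_density_def
      by simp
  qed
  have "has_bochner_integral lborel (\<lambda>z. exp (s^2/2) * normal_density s 1 z) (exp (s^2/2) * 1)"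
    by (intro has_bochner_integral_mult_right) (simp add: has_bochner_integral_iff)
  then show ?thesis unfolding eq by simp
qed

lemma phi_int: "has_bochner_integral lborel Defs.std_normal_density 1"
  using expmom[of 0] by simp

lemma mom1:
  "has_bochner_integral lborel (\<lambda>z. (1 + exp (c + s*z)) * Defs.std_normal_density z) (1 + exp (c + s^2/2))"
proof -
  have "has_bochner_integral lborel (\<lambda>z. Defs.std_normal_density z + exp c * (exp (s*z) * Defs.std_normal_density z)) (1 + exp c * exp (s^2/2))"
    by (intro has_bochner_integral_add has_bochner_integral_mult_right phi_int expmom)
  then show ?thesis by (simp add: exp_add algebra_simps)
qed


lemma abs_LINT_le:
  fixes f g :: "'a \<Rightarrow> real"
  assumes "integrable M g" "\<And>x. x \<in> space M \<Longrightarrow> \<bar>f x\<bar> \<le> g x"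
  shows "\<bar>integral\<^sup>L M f\<bar> \<le> integral\<^sup>L M g"
proof (cases "integrable M f")
  case True
  have "\<bar>integral\<^sup>L M f\<bar> \<le> integral\<^sup>L M (\<lambda>x. \<bar>f x\<bar>)" by (rule integral_abs_bound)
  also have "\<dots> \<le> integral\<^sup>L M g" using True assms by (intro integral_mono) auto
  finally show ?thesis .
next
  case False
  then have "integral\<^sup>L M f = 0" by (rule not_integrable_integral_eq)
  moreover have "0 \<le> integral\<^sup>L M g" by (rule Bochner_Integration.integral_nonneg) (metis abs_ge_zero order_trans assms(2))
  ultimately show ?thesis by simp
qed

lemma sqrt_sq_mult: "t \<ge> 0 \<Longrightarrow> (\<sigma> * sqrt t)^2 = \<sigma>^2 * t"
  by (simp add: power_mult_distrib)

lemma heat_bound: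
  assumes t: "t \<ge> 0" and f: "\<And>y. \<bar>f y\<bar> \<le> K * (1 + exp y)"
  shows "\<bar>heat_op \<sigma> \<rho> t f x\<bar> \<le> K * (1 + exp (x + \<rho> * t + \<sigma>^2 * t / 2))"
proof -
  have hb: "has_bochner_integral lborel (\<lambda>z. K * ((1 + exp ((x + \<rho> * t) + (\<sigma> * sqrt t) * z)) * Defs.std_normal_density z))
     (K * (1 + exp ((x + \<rho> * t) + (\<sigma> * sqrt t)^2/2)))"
    by (intro has_bochner_integral_mult_right mom1)
  have "\<bar>heat_op \<sigma> \<rho> t f x\<bar> \<le> (LINT z|lborel. K * ((1 + exp ((x + \<rho> * t) + (\<sigma> * sqrt t) * z)) * Defs.std_normal_density z))"
    unfolding heat_op_def
  proof (rule abs_LINT_le)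
    show "integrable lborel (\<lambda>z. K * ((1 + exp ((x + \<rho> * t) + (\<sigma> * sqrt t) * z)) * Defs.std_normal_density z))"
      using hb by (simp add: has_bochner_integral_iff)
    fix z
    have p: "Defs.std_normal_density z \<ge> 0" unfolding Defs.std_normal_density_def by simp
    have "\<bar>f (x + \<rho> * t + \<sigma> * sqrt t * z)\<bar> \<le> K * (1 + exp ((x + \<rho> * t) + (\<sigma> * sqrt t) * z))"
      using f[of "x + \<rho> * t + \<sigma> * sqrt t * z"] by (simp add: add.assoc)
    then have "\<bar>f (x + \<rho> * t + \<sigma> * sqrt t * z)\<bar> * Defs.std_normal_density z \<le> K * (1 + exp ((x + \<rho> * t) + (\<sigma> * sqrt t) * z)) * Defs.std_normal_density z"
      by (rule mult_right_mono[OF _ p])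
    then show "\<bar>f (x + \<rho> * t + \<sigma> * sqrt t * z) * Defs.std_normal_density z\<bar>
      \<le> K * ((1 + exp ((x + \<rho> * t) + (\<sigma> * sqrt t) * z)) * Defs.std_normal_density z)"
      using p by (simp add: abs_mult mult.assoc)
  qed
  also have "\<dots> = K * (1 + exp (x + \<rho> * t + \<sigma>^2 * t / 2))"
    using hb t by (simp add: has_bochner_integral_iff sqrt_sq_mult)
  finally show ?thesis .
qed

lemma growth_const:
  fixes x \<rho> \<sigma> t T :: real
  assumes "t \<in> {0..T}"
  shows "1 + exp (x + \<rho> * t + \<sigma>^2 * t / 2) \<le> exp (\<bar>\<rho>\<bar> * T + \<sigma>^2 * T / 2) * (1 + exp x)"
proof -
  have t: "0 \<le> t" "t \<le> T" using assms by auto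
  have a: "\<rho> * t + \<sigma>^2 * t / 2 \<le> \<bar>\<rho>\<bar> * T + \<sigma>^2 * T / 2"
  proof -
    have "\<rho> * t \<le> \<bar>\<rho>\<bar> * t" using t(1) by (intro mult_right_mono) auto
    also have "\<dots> \<le> \<bar>\<rho>\<bar> * T" using t by (simp add: mult_left_mono)
    finally have "\<rho> * t \<le> \<bar>\<rho>\<bar> * T" .
    moreover have "\<sigma>^2 * t / 2 \<le> \<sigma>^2 * T / 2" using t by (simp add: mult_left_mono divide_right_mono)
    ultimately show ?thesis by linarith
  qed
  have T0: "0 \<le> \<bar>\<rho>\<bar> * T + \<sigma>^2 * T / 2" using t by simp
  have e1: "1 \<le> exp (\<bar>\<rho>\<bar> * T + \<sigma>^2 * T / 2)" using T0 by simp
  moreover have e2: "exp (x + \<rho> * t + \<sigma>^2 * t / 2) \<le> exp (\<bar>\<rho>\<bar> * T + \<sigma>^2 * T / 2) * exp x"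
    using a by (simp add: exp_add[symmetric] add.assoc add.commute)
  have "exp (\<bar>\<rho>\<bar> * T + \<sigma>^2 * T / 2) * (1 + exp x) = exp (\<bar>\<rho>\<bar> * T + \<sigma>^2 * T / 2) + exp (\<bar>\<rho>\<bar> * T + \<sigma>^2 * T / 2) * exp x"
    by (simp add: distrib_left)
  then show ?thesis using e1 e2 by linarith
qed

lemma heat_bound2:
  assumes t: "t \<in> {0..T}" and f: "\<And>y. \<bar>f y\<bar> \<le> K * (1 + exp y)"
  shows "\<bar>heat_op \<sigma> \<rho> t f x\<bar> \<le> K * exp (\<bar>\<rho>\<bar> * T + \<sigma>^2 * T / 2) * (1 + exp x)"
proof -
  have K: "K \<ge> 0" using f[of 0] by (smt (verit) exp_gt_zero zero_le_mult_iff)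
  have "\<bar>heat_op \<sigma> \<rho> t f x\<bar> \<le> K * (1 + exp (x + \<rho> * t + \<sigma>^2 * t / 2))"
    using t by (intro heat_bound f) auto
  also have "\<dots> \<le> K * (exp (\<bar>\<rho>\<bar> * T + \<sigma>^2 * T / 2) * (1 + exp x))"
    using K growth_const[OF t] by (rule mult_left_mono[rotated])
  finally show ?thesis by (simp add: mult.assoc)
qed

lemma heat_integrable:
  assumes t: "t \<ge> 0" and f: "\<And>y. \<bar>f y\<bar> \<le> K * (1 + exp y)" and fm[measurable]: "f \<in> borel_measurable borel"
  shows "integrable lborel (\<lambda>z. f (x + \<rho> * t + \<sigma> * sqrt t * z) * Defs.std_normal_density z)"
proof (rule Bochner_Integration.integrable_bound)
  have K: "K \<ge> 0" using f[of 0] by (smt (verit) exp_gt_zero zero_le_mult_iff)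
  show "integrable lborel (\<lambda>z. K * ((1 + exp ((x + \<rho> * t) + (\<sigma> * sqrt t) * z)) * Defs.std_normal_density z))"
    using mom1 by (intro integrable_mult_right) (auto simp: has_bochner_integral_iff)
  show "(\<lambda>z. f (x + \<rho> * t + \<sigma> * sqrt t * z) * Defs.std_normal_density z) \<in> borel_measurable lborel"
    by measurable
  show "AE z in lborel. norm (f (x + \<rho> * t + \<sigma> * sqrt t * z) * Defs.std_normal_density z)
      \<le> norm (K * ((1 + exp ((x + \<rho> * t) + (\<sigma> * sqrt t) * z)) * Defs.std_normal_density z))"
  proof (rule AE_I2)
    fix z
    have p: "Defs.std_normal_density z \<ge> 0" unfolding Defs.std_normal_density_def by simp
    have "\<bar>f (x + \<rho> * t + \<sigma> * sqrt t * z)\<bar> \<le> K * (1 + exp ((x + \<rho> * t) + (\<sigma> * sqrt t) * z))"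
      using f[of "x + \<rho> * t + \<sigma> * sqrt t * z"] by (simp add: add.assoc)
    then have "\<bar>f (x + \<rho> * t + \<sigma> * sqrt t * z)\<bar> * Defs.std_normal_density z \<le> K * (1 + exp ((x + \<rho> * t) + (\<sigma> * sqrt t) * z)) * Defs.std_normal_density z"
      by (rule mult_right_mono[OF _ p])
    then show "norm (f (x + \<rho> * t + \<sigma> * sqrt t * z) * Defs.std_normal_density z)
      \<le> norm (K * ((1 + exp ((x + \<rho> * t) + (\<sigma> * sqrt t) * z)) * Defs.std_normal_density z))"
      using p K by (simp add: abs_mult mult.assoc)
  qed
qed

lemma heat_0: "heat_op \<sigma> \<rho> 0 f x = f x"
  using phi_int unfolding heat_op_def by (simp add: has_bochner_integral_iff)

lemma phi_nonneg: "Defs.std_normal_density z \<ge> 0" unfolding Defs.std_normal_density_def by simp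

lemma heat_nonneg: assumes "\<And>y. f y \<ge> 0" shows "heat_op \<sigma> \<rho> t f x \<ge> 0"
  unfolding heat_op_def by (rule Bochner_Integration.integral_nonneg) (simp add: phi_nonneg assms)

lemma heat_cmult: "heat_op \<sigma> \<rho> t (\<lambda>y. c * f y) x = c * heat_op \<sigma> \<rho> t f x"
  unfolding heat_op_def by (simp add: mult.assoc)

lemma heat_diff:
  assumes "t \<ge> 0" "\<And>y. \<bar>f y\<bar> \<le> K * (1 + exp y)" "f \<in> borel_measurable borel"
    "\<And>y. \<bar>g y\<bar> \<le> K' * (1 + exp y)" "g \<in> borel_measurable borel"
  shows "heat_op \<sigma> \<rho> t f x - heat_op \<sigma> \<rho> t g x = heat_op \<sigma> \<rho> t (\<lambda>y. f y - g y) x"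
  unfolding heat_op_def
  using heat_integrable[OF assms(1-3), of x \<rho> \<sigma>] heat_integrable[OF assms(1,4,5), of x \<rho> \<sigma>]
  by (simp add: left_diff_distrib)


lemma heat_meas[measurable]:
  assumes [measurable]: "h \<in> borel_measurable borel"
  shows "(\<lambda>y. heat_op \<sigma> \<rho> b h y) \<in> borel_measurable borel"
  unfolding heat_op_def by measurable

lemma nd_scale:
  assumes s: "s > 0"
  shows "s * normal_density 0 s (s * z) = Defs.std_normal_density z"
proof -
  have "sqrt (2 * pi * s\<^sup>2) = s * sqrt (2 * pi)" using s
    by (simp add: real_sqrt_mult mult.commute)
  then show ?thesis using s unfolding normal_density_def Defs.std_normal_density_def
    by (simp add: power_mult_distrib field_simps)
qed

lemma cv:
  assumes s: "s > 0" and F[measurable]: "F \<in> borel_measurable borel"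
  shows "(\<integral>\<^sup>+z. F (c + s * z) * ennreal (Defs.std_normal_density z) \<partial>lborel)
       = (\<integral>\<^sup>+y. F (c + y) * ennreal (normal_density 0 s y) \<partial>lborel)"
proof -
  have "(\<integral>\<^sup>+y. F (c + y) * ennreal (normal_density 0 s y) \<partial>lborel)
      = \<bar>s\<bar> * (\<integral>\<^sup>+z. F (c + (0 + s * z)) * ennreal (normal_density 0 s (0 + s * z)) \<partial>lborel)"
    using s by (intro nn_integral_real_affine) auto
  also have "\<dots> = (\<integral>\<^sup>+z. ennreal s * (F (c + s * z) * ennreal (normal_density 0 s (s * z))) \<partial>lborel)"
    using s by (subst nn_integral_cmult) auto
  also have "\<dots> = (\<integral>\<^sup>+z. F (c + s * z) * ennreal (Defs.std_normal_density z) \<partial>lborel)"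
  proof (intro nn_integral_cong)
    fix z
    have "ennreal s * (F (c + s * z) * ennreal (normal_density 0 s (s * z)))
        = F (c + s * z) * ennreal (s * normal_density 0 s (s * z))"
      using s by (simp add: ennreal_mult mult.assoc mult.left_commute)
    then show "ennreal s * (F (c + s * z) * ennreal (normal_density 0 s (s * z))) = F (c + s * z) * ennreal (Defs.std_normal_density z)"
      using nd_scale[OF s] by simp
  qed
  finally show ?thesis by simp
qed


lemma heat_enn:
  assumes t: "t \<ge> 0" and h[measurable]: "h \<in> borel_measurable borel"
    and hn: "\<And>y. h y \<ge> 0" and hb: "\<And>y. \<bar>h y\<bar> \<le> K * (1 + exp y)"
  shows "ennreal (heat_op \<sigma> \<rho> t h x) =
     (\<integral>\<^sup>+z. ennreal (h (x + \<rho> * t + \<sigma> * sqrt t * z)) * ennreal (Defs.std_normal_density z) \<partial>lborel)"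
proof -
  have "(\<integral>\<^sup>+z. ennreal (h (x + \<rho> * t + \<sigma> * sqrt t * z) * Defs.std_normal_density z) \<partial>lborel)
      = ennreal (heat_op \<sigma> \<rho> t h x)"
    unfolding heat_op_def
    by (intro nn_integral_eq_integral heat_integrable[OF t hb h] AE_I2) (simp add: hn phi_nonneg)
  then show ?thesis by (simp add: ennreal_mult hn phi_nonneg)
qed

lemma heat_semigroup_pos:
  assumes \<sigma>: "\<sigma> > 0" and a: "a > 0" and b: "b > 0"
    and h[measurable]: "h \<in> borel_measurable borel"
    and hn: "\<And>y. h y \<ge> 0" and hb: "\<And>y. \<bar>h y\<bar> \<le> K * (1 + exp y)"
  shows "heat_op \<sigma> \<rho> a (heat_op \<sigma> \<rho> b h) x = heat_op \<sigma> \<rho> (a + b) h x"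
proof -
  define s1 where "s1 = \<sigma> * sqrt a"
  define s2 where "s2 = \<sigma> * sqrt b"
  have s1: "s1 > 0" and s2: "s2 > 0" using \<sigma> a b by (auto simp: s1_def s2_def)
  have s12: "sqrt (s2\<^sup>2 + s1\<^sup>2) = \<sigma> * sqrt (a + b)"
    using \<sigma> a b by (simp add: s1_def s2_def power_mult_distrib real_sqrt_mult distrib_left[symmetric] add.commute)
  define c where "c = x + \<rho> * (a + b)"
  define Q where "Q = (\<lambda>y. \<integral>\<^sup>+z. ennreal (h (y + \<rho> * b + s2 * z)) * ennreal (Defs.std_normal_density z) \<partial>lborel)"
  have Qm[measurable]: "Q \<in> borel_measurable borel" unfolding Q_def by measurable
  have hbn: "\<And>y. heat_op \<sigma> \<rho> b h y \<ge> 0" by (rule heat_nonneg) (rule hn)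
  have hbb: "\<And>y. \<bar>heat_op \<sigma> \<rho> b h y\<bar> \<le> K * exp (\<bar>\<rho>\<bar> * b + \<sigma>^2 * b / 2) * (1 + exp y)"
    using b by (intro heat_bound2 hb) auto
  have Qeq: "\<And>y. ennreal (heat_op \<sigma> \<rho> b h y) = Q y"
    unfolding Q_def s2_def using b by (intro heat_enn[OF _ h hn hb]) auto
  have "ennreal (heat_op \<sigma> \<rho> a (heat_op \<sigma> \<rho> b h) x)
     = (\<integral>\<^sup>+z. ennreal (heat_op \<sigma> \<rho> b h (x + \<rho> * a + s1 * z)) * ennreal (Defs.std_normal_density z) \<partial>lborel)"
    unfolding s1_def using a by (intro heat_enn[OF _ _ hbn hbb]) auto
  also have "\<dots> = (\<integral>\<^sup>+z. Q (x + \<rho> * a + s1 * z) * ennreal (Defs.std_normal_density z) \<partial>lborel)"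
    by (simp add: Qeq)
  also have "\<dots> = (\<integral>\<^sup>+y1. Q (x + \<rho> * a + y1) * ennreal (normal_density 0 s1 y1) \<partial>lborel)"
    by (rule cv[OF s1 Qm])
  also have "\<dots> = (\<integral>\<^sup>+y1. (\<integral>\<^sup>+v. ennreal (h (x + \<rho> * a + y1 + \<rho> * b + v)) * ennreal (normal_density 0 s2 v) \<partial>lborel) * ennreal (normal_density 0 s1 y1) \<partial>lborel)"
    unfolding Q_def by (subst cv[OF s2]) auto
  also have "\<dots> = (\<integral>\<^sup>+y1. (\<integral>\<^sup>+w. ennreal (h (c + w)) * ennreal (normal_density 0 s2 (w - y1)) \<partial>lborel) * ennreal (normal_density 0 s1 y1) \<partial>lborel)"
  proof (rule nn_integral_cong)
    fix y1
    have "(\<integral>\<^sup>+v. ennreal (h (x + \<rho> * a + y1 + \<rho> * b + v)) * ennreal (normal_density 0 s2 v) \<partial>lborel)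
       = ennreal \<bar>1::real\<bar> * (\<integral>\<^sup>+w. ennreal (h (x + \<rho> * a + y1 + \<rho> * b + (- y1 + 1 * w))) * ennreal (normal_density 0 s2 (- y1 + 1 * w)) \<partial>lborel)"
      by (intro nn_integral_real_affine) auto
    also have "\<dots> = (\<integral>\<^sup>+w. ennreal (h (c + w)) * ennreal (normal_density 0 s2 (w - y1)) \<partial>lborel)"
      unfolding c_def by (simp add: algebra_simps)
    finally show "(\<integral>\<^sup>+v. ennreal (h (x + \<rho> * a + y1 + \<rho> * b + v)) * ennreal (normal_density 0 s2 v) \<partial>lborel) * ennreal (normal_density 0 s1 y1)
       = (\<integral>\<^sup>+w. ennreal (h (c + w)) * ennreal (normal_density 0 s2 (w - y1)) \<partial>lborel) * ennreal (normal_density 0 s1 y1)" by simp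
  qed
  also have "\<dots> = (\<integral>\<^sup>+y1. (\<integral>\<^sup>+w. ennreal (h (c + w)) * ennreal (normal_density 0 s2 (w - y1) * normal_density 0 s1 y1) \<partial>lborel) \<partial>lborel)"
    by (subst nn_integral_multc[symmetric]) (auto simp: ennreal_mult mult.assoc)
  also have "\<dots> = (\<integral>\<^sup>+w. (\<integral>\<^sup>+y1. ennreal (h (c + w)) * ennreal (normal_density 0 s2 (w - y1) * normal_density 0 s1 y1) \<partial>lborel) \<partial>lborel)"
    by (rule lborel_pair.Fubini'[symmetric]) measurable
  also have "\<dots> = (\<integral>\<^sup>+w. ennreal (h (c + w)) * (\<integral>\<^sup>+y1. ennreal (normal_density 0 s2 (w - y1) * normal_density 0 s1 y1) \<partial>lborel) \<partial>lborel)"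
    by (subst nn_integral_cmult) auto
  also have "\<dots> = (\<integral>\<^sup>+w. ennreal (h (c + w)) * ennreal (normal_density 0 (sqrt (s2\<^sup>2 + s1\<^sup>2)) w) \<partial>lborel)"
    using conv_normal_density_zero_mean[OF s2 s1] by (simp add: fun_eq_iff)
  also have "\<dots> = (\<integral>\<^sup>+z. ennreal (h (c + (\<sigma> * sqrt (a + b)) * z)) * ennreal (Defs.std_normal_density z) \<partial>lborel)"
    unfolding s12 using \<sigma> a b by (intro cv[symmetric]) auto
  also have "\<dots> = ennreal (heat_op \<sigma> \<rho> (a + b) h x)"
    unfolding c_def using a b by (subst heat_enn[OF _ h hn hb]) (auto simp: mult.assoc)
  finally have E: "ennreal (heat_op \<sigma> \<rho> a (heat_op \<sigma> \<rho> b h) x) = ennreal (heat_op \<sigma> \<rho> (a + b) h x)" .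
  have "0 \<le> heat_op \<sigma> \<rho> a (heat_op \<sigma> \<rho> b h) x" by (rule heat_nonneg) (rule hbn)
  moreover have "0 \<le> heat_op \<sigma> \<rho> (a + b) h x" by (rule heat_nonneg) (rule hn)
  ultimately show ?thesis using E by (simp add: ennreal_inj)
qed

lemma heat_semigroup:
  assumes \<sigma>: "\<sigma> > 0" and a: "a \<ge> 0" and b: "b \<ge> 0"
    and h[measurable]: "h \<in> borel_measurable borel"
    and hn: "\<And>y. h y \<ge> 0" and hb: "\<And>y. \<bar>h y\<bar> \<le> K * (1 + exp y)"
  shows "heat_op \<sigma> \<rho> a (heat_op \<sigma> \<rho> b h) x = heat_op \<sigma> \<rho> (a + b) h x"
proof (cases "a = 0 \<or> b = 0")
  case True
  then show ?thesis
  proof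
    assume "a = 0" then show ?thesis by (simp add: heat_0)
  next
    assume "b = 0"
    then have "heat_op \<sigma> \<rho> b h = h" by (simp add: heat_0 fun_eq_iff)
    then show ?thesis using \<open>b = 0\<close> by simp
  qed
next
  case False
  then show ?thesis using a b by (intro heat_semigroup_pos[OF \<sigma> _ _ h hn hb]) auto
qed


lemma pow_fact_zero: "(\<lambda>n. x ^ n / fact n) \<longlonglongrightarrow> (0::real)"
  using summable_LIMSEQ_zero [OF summable_exp] by (auto simp add: inverse_eq_divide)

lemma ftc:
  fixes f F :: "real \<Rightarrow> real"
  assumes "a \<le> b" "\<And>s. a \<le> s \<Longrightarrow> s \<le> b \<Longrightarrow> (F has_real_derivative f s) (at s)"
    "continuous_on {a..b} f"
  shows "(LINT s:{a..b}|lborel. f s) = F b - F a"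
  unfolding set_lebesgue_integral_def
  by (rule integral_FTC_atLeastAtMost[OF assms(1) _ assms(3)])
     (simp add: has_real_derivative_iff_has_vector_derivative[symmetric] has_field_derivative_at_within assms(2))

lemma g_pos:
  assumes "v \<ge> 0"
  shows "xva_g RB lamB RC lamC sF cM v = (cM - ((1 - RC) * lamC + sF)) * v"
  using assms unfolding xva_g_def by (simp add: algebra_simps)

lemma g_lip:
  assumes a0: "0 \<le> \<alpha>" "\<alpha> \<le> cM" and k0: "0 \<le> k" "k \<le> cM"
    and \<alpha>: "\<alpha> = (1 - RB) * lamB" and k: "k = (1 - RC) * lamC + sF"
  shows "\<bar>xva_g RB lamB RC lamC sF cM a - xva_g RB lamB RC lamC sF cM b\<bar> \<le> cM * \<bar>a - b\<bar>"
proof -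
  define p where "p = max a 0 - max b 0"
  define q where "q = max (- a) 0 - max (- b) 0"
  have pq: "\<bar>p\<bar> + \<bar>q\<bar> = \<bar>a - b\<bar>" unfolding p_def q_def by (auto simp: max_def)
  have "xva_g RB lamB RC lamC sF cM a - xva_g RB lamB RC lamC sF cM b = (cM - k) * p + (cM - \<alpha>) * (- q)"
  proof -
    have e: "a - b = p - q" unfolding p_def q_def by (auto simp: max_def)
    have "xva_g RB lamB RC lamC sF cM a - xva_g RB lamB RC lamC sF cM b = cM * (a - b) - k * p + \<alpha> * q"
      unfolding xva_g_def p_def q_def \<alpha> k by (simp add: algebra_simps)
    also have "\<dots> = (cM - k) * p + (cM - \<alpha>) * (- q)" unfolding e by (simp add: algebra_simps)
    finally show ?thesis .
  qed
  also have "\<bar>\<dots>\<bar> \<le> (cM - k) * \<bar>p\<bar> + (cM - \<alpha>) * \<bar>q\<bar>"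
  proof -
    have "\<bar>(cM - k) * p + (cM - \<alpha>) * (- q)\<bar> \<le> \<bar>(cM - k) * p\<bar> + \<bar>(cM - \<alpha>) * (- q)\<bar>"
      by (rule abs_triangle_ineq)
    also have "\<dots> = (cM - k) * \<bar>p\<bar> + (cM - \<alpha>) * \<bar>q\<bar>"
      using a0 k0 by (simp add: abs_mult)
    finally show ?thesis .
  qed
  also have "\<dots> \<le> cM * \<bar>p\<bar> + cM * \<bar>q\<bar>"
    using a0 k0 by (intro add_mono mult_right_mono) auto
  finally show ?thesis using pq by (simp add: distrib_left[symmetric])
qed


lemma meas2:
  fixes v :: "real \<Rightarrow> real \<Rightarrow> real"
  assumes v: "(\<lambda>(s, y). v s y) \<in> borel_measurable borel"
    and f: "f \<in> borel_measurable M" and g: "g \<in> borel_measurable M"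
  shows "(\<lambda>z. v (f z) (g z)) \<in> borel_measurable M"
proof -
  have "(\<lambda>z. (f z, g z)) \<in> M \<rightarrow>\<^sub>M borel \<Otimes>\<^sub>M borel" using f g by (rule measurable_Pair)
  then have "(\<lambda>z. (f z, g z)) \<in> M \<rightarrow>\<^sub>M (borel :: (real \<times> real) measure)" by (simp add: borel_prod)
  from measurable_compose[OF this v] show ?thesis by simp
qed

lemma A_int:
  fixes v :: "real \<Rightarrow> real \<Rightarrow> real" and G :: "real \<Rightarrow> real"
  assumes vm: "(\<lambda>(s, y). v s y) \<in> borel_measurable borel" and Gm[measurable]: "G \<in> borel_measurable borel"
    and Gb: "\<And>a. \<bar>G a\<bar> \<le> L * \<bar>a\<bar>" and L: "L \<ge> 0"
    and vb: "\<And>s y. s \<in> {0..T} \<Longrightarrow> \<bar>v s y\<bar> \<le> Kv * (1 + exp y)"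
    and \<tau>: "\<tau> \<in> {0..T}" and c: "c \<ge> 0"
  shows "set_integrable lborel {0..\<tau>} (\<lambda>s. exp (- c * (\<tau> - s)) * heat_op \<sigma> \<rho> (\<tau> - s) (\<lambda>y. G (v s y)) x)"
proof (rule set_integrable_bound)
  note vm'[measurable (raw)] = meas2[OF vm]
  show "set_integrable lborel {0..\<tau>} (\<lambda>s. L * Kv * exp (\<bar>\<rho>\<bar> * T + \<sigma>^2 * T / 2) * (1 + exp x))"
    by (rule borel_integrable_atLeastAtMost') (rule continuous_on_const)
  show "set_borel_measurable lborel {0..\<tau>} (\<lambda>s. exp (- c * (\<tau> - s)) * heat_op \<sigma> \<rho> (\<tau> - s) (\<lambda>y. G (v s y)) x)"
    unfolding set_borel_measurable_def heat_op_def by measurable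
  show "AE s in lborel. s \<in> {0..\<tau>} \<longrightarrow> norm (exp (- c * (\<tau> - s)) * heat_op \<sigma> \<rho> (\<tau> - s) (\<lambda>y. G (v s y)) x)
      \<le> norm (L * Kv * exp (\<bar>\<rho>\<bar> * T + \<sigma>^2 * T / 2) * (1 + exp x))"
  proof (rule AE_I2, rule impI)
    fix s assume s: "s \<in> {0..\<tau>}"
    then have sT: "s \<in> {0..T}" and tsT: "\<tau> - s \<in> {0..T}" using \<tau> by auto
    have e1: "exp (- c * (\<tau> - s)) \<le> 1" using s c by (simp add: mult_nonneg_nonneg)
    have gb: "\<bar>G (v s y)\<bar> \<le> (L * Kv) * (1 + exp y)" for y
    proof -
      have "\<bar>G (v s y)\<bar> \<le> L * \<bar>v s y\<bar>" by (rule Gb)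
      also have "\<dots> \<le> L * (Kv * (1 + exp y))" using vb[OF sT] L by (rule mult_left_mono)
      finally show ?thesis by (simp add: mult.assoc)
    qed
    have hb: "\<bar>heat_op \<sigma> \<rho> (\<tau> - s) (\<lambda>y. G (v s y)) x\<bar> \<le> L * Kv * exp (\<bar>\<rho>\<bar> * T + \<sigma>^2 * T / 2) * (1 + exp x)"
      by (rule heat_bound2[OF tsT gb])
    have "\<bar>exp (- c * (\<tau> - s)) * heat_op \<sigma> \<rho> (\<tau> - s) (\<lambda>y. G (v s y)) x\<bar> \<le> 1 * \<bar>heat_op \<sigma> \<rho> (\<tau> - s) (\<lambda>y. G (v s y)) x\<bar>"
      unfolding abs_mult using e1 by (intro mult_right_mono) auto
    also have "\<dots> \<le> L * Kv * exp (\<bar>\<rho>\<bar> * T + \<sigma>^2 * T / 2) * (1 + exp x)" using hb by simp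
    finally show "norm (exp (- c * (\<tau> - s)) * heat_op \<sigma> \<rho> (\<tau> - s) (\<lambda>y. G (v s y)) x)
      \<le> norm (L * Kv * exp (\<bar>\<rho>\<bar> * T + \<sigma>^2 * T / 2) * (1 + exp x))" by simp
  qed
qed


theorem mainTheorem2:
  fixes T r \<sigma> qS \<gamma>S lamB lamC RB RC sF cM :: real
    and H :: "real \<Rightarrow> real"
    and u :: "real \<Rightarrow> real \<Rightarrow> real"
  assumes "T > 0" and "r > 0" and "\<sigma> > 0"
    and "lamB \<ge> 0" and "lamC \<ge> 0"
    and "RB \<in> {0..1}" and "RC \<in> {0..1}" and "sF \<ge> 0"
    and H_nonneg: "\<forall>S>0. H S \<ge> 0"
    and H_meas: "(\<lambda>x. H (exp x)) \<in> borel_measurable borel"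
    and H_growth: "\<exists>C. \<forall>S>0. H S \<le> C * (1 + S)"
    and cM: "cM \<ge> max ((1 - RB) * lamB) ((1 - RC) * lamC + sF)"
    and u_meas: "(\<lambda>(s, y). u s y) \<in> borel_measurable borel"
    and u_growth: "\<exists>C. \<forall>\<tau>\<in>{0..T}. \<forall>x. \<bar>u \<tau> x\<bar> \<le> C * (1 + exp x)"
    and u_sol: "mild_solution T r \<sigma> (qS - \<gamma>S - \<sigma>^2/2) cM
                  (xva_g RB lamB RC lamC sF cM) (\<lambda>x. H (exp x)) u"
  shows "\<forall>t\<in>{0..T}. \<forall>S>0.
           u (T - t) (ln S) \<ge> 0 \<and>
           u (T - t) (ln S) = exp (- ((1 - RC) * lamC + sF) * (T - t)) * bs_price T r \<sigma> qS \<gamma>S H t S"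
proof -
  define \<rho> where "\<rho> = qS - \<gamma>S - \<sigma>^2/2"
  define G where "G = xva_g RB lamB RC lamC sF cM"
  define h where "h = (\<lambda>x. H (exp x))"
  define k where "k = (1 - RC) * lamC + sF"
  define \<alpha> where "\<alpha> = (1 - RB) * lamB"
  define C1 where "C1 = exp (\<bar>\<rho>\<bar> * T + \<sigma>^2 * T / 2)"
  define w where "w = (\<lambda>\<tau> x. exp (- (r + k) * \<tau>) * heat_op \<sigma> \<rho> \<tau> h x)"
  have \<sigma>: "\<sigma> > 0" and r: "r > 0" by fact+
  have k0: "0 \<le> k" "k \<le> cM" using assms(5,7,8) cM unfolding k_def by auto
  have \<alpha>0: "0 \<le> \<alpha>" "\<alpha> \<le> cM" using assms(4,6) cM unfolding \<alpha>_def by auto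
  have cM0: "0 \<le> cM" using k0 by linarith
  have C1pos: "C1 > 0" unfolding C1_def by simp
  have hm[measurable]: "h \<in> borel_measurable borel" using H_meas unfolding h_def .
  have hn: "\<And>y. h y \<ge> 0" using H_nonneg unfolding h_def by simp
  obtain Ch where Ch: "\<And>y. \<bar>h y\<bar> \<le> Ch * (1 + exp y)"
  proof -
    obtain C where C: "\<forall>S>0. H S \<le> C * (1 + S)" using H_growth by blast
    have "\<bar>h y\<bar> \<le> C * (1 + exp y)" for y using C hn[of y] unfolding h_def by simp
    then show ?thesis using that by blast
  qed
  obtain Cu where Cu: "\<And>\<tau> x. \<tau> \<in> {0..T} \<Longrightarrow> \<bar>u \<tau> x\<bar> \<le> Cu * (1 + exp x)"
    using u_growth by blast
  note um[measurable (raw)] = meas2[OF u_meas]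
  have Gm[measurable]: "G \<in> borel_measurable borel" unfolding G_def xva_g_def by measurable
  have Gpos: "\<And>v. v \<ge> 0 \<Longrightarrow> G v = (cM - k) * v" unfolding G_def k_def by (rule g_pos)
  have Glip: "\<And>a b. \<bar>G a - G b\<bar> \<le> cM * \<bar>a - b\<bar>"
    unfolding G_def by (rule g_lip[OF \<alpha>0 k0 \<alpha>_def k_def])
  have G0: "G 0 = 0" unfolding G_def xva_g_def by simp
  have Gb: "\<And>a. \<bar>G a\<bar> \<le> cM * \<bar>a\<bar>" using Glip[of _ 0] G0 by simp
  have wn: "\<And>\<tau> x. w \<tau> x \<ge> 0" unfolding w_def by (simp add: heat_nonneg hn)
  have wb: "\<And>\<tau> x. \<tau> \<in> {0..T} \<Longrightarrow> \<bar>w \<tau> x\<bar> \<le> (Ch * C1) * (1 + exp x)"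
  proof -
    fix \<tau> x assume \<tau>: "\<tau> \<in> {0..T}"
    have "0 \<le> (r + k) * \<tau>" using \<tau> r k0 by (intro mult_nonneg_nonneg) auto
    then have e1: "exp (- (r + k) * \<tau>) \<le> 1" by (simp add: algebra_simps)
    have "\<bar>w \<tau> x\<bar> \<le> 1 * \<bar>heat_op \<sigma> \<rho> \<tau> h x\<bar>"
      unfolding w_def abs_mult using e1 by (intro mult_right_mono) auto
    also have "\<dots> \<le> Ch * C1 * (1 + exp x)" unfolding C1_def using heat_bound2[OF \<tau> Ch] by simp
    finally show "\<bar>w \<tau> x\<bar> \<le> (Ch * C1) * (1 + exp x)" .
  qed
  have "(\<lambda>(s, y). w s y) \<in> borel_measurable (borel \<Otimes>\<^sub>M borel)"
    unfolding w_def heat_op_def by measurable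
  then have wm: "(\<lambda>(s, y). w s y) \<in> borel_measurable borel" by (simp add: borel_prod)
  note wm'[measurable (raw)] = meas2[OF wm]
  have hsg: "\<And>a b x. a \<ge> 0 \<Longrightarrow> b \<ge> 0 \<Longrightarrow> heat_op \<sigma> \<rho> a (heat_op \<sigma> \<rho> b h) x = heat_op \<sigma> \<rho> (a + b) h x"
    by (rule heat_semigroup[OF \<sigma> _ _ hm hn Ch])
  have wsol: "\<And>\<tau> x. \<tau> \<in> {0..T} \<Longrightarrow> w \<tau> x = exp (- (r + cM) * \<tau>) * heat_op \<sigma> \<rho> \<tau> h x
      + (LINT s:{0..\<tau>}|lborel. exp (- (r + cM) * (\<tau> - s)) * heat_op \<sigma> \<rho> (\<tau> - s) (\<lambda>y. G (w s y)) x)"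
  proof -
    fix \<tau> x assume \<tau>: "\<tau> \<in> {0..T}"
    define P where "P = heat_op \<sigma> \<rho> \<tau> h x"
    define E where "E = exp (- (r + cM) * \<tau>)"
    have pt: "exp (- (r + cM) * (\<tau> - s)) * heat_op \<sigma> \<rho> (\<tau> - s) (\<lambda>y. G (w s y)) x
        = P * (cM - k) * E * exp ((cM - k) * s)" if s: "s \<in> {0..\<tau>}" for s
    proof -
      have "(\<lambda>y. G (w s y)) = (\<lambda>y. ((cM - k) * exp (- (r + k) * s)) * heat_op \<sigma> \<rho> s h y)"
        using Gpos wn unfolding w_def by (auto simp: fun_eq_iff)
      then have "heat_op \<sigma> \<rho> (\<tau> - s) (\<lambda>y. G (w s y)) x = ((cM - k) * exp (- (r + k) * s)) * heat_op \<sigma> \<rho> (\<tau> - s) (heat_op \<sigma> \<rho> s h) x"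
        by (simp add: heat_cmult)
      also have "\<dots> = ((cM - k) * exp (- (r + k) * s)) * P"
        unfolding P_def using s hsg[of "\<tau> - s" s x] by simp
      finally have H1: "heat_op \<sigma> \<rho> (\<tau> - s) (\<lambda>y. G (w s y)) x = ((cM - k) * exp (- (r + k) * s)) * P" .
      have H2: "exp (- (r + cM) * (\<tau> - s)) * exp (- (r + k) * s) = E * exp ((cM - k) * s)"
        unfolding E_def exp_add[symmetric] by (simp add: algebra_simps)
      have "exp (- (r + cM) * (\<tau> - s)) * heat_op \<sigma> \<rho> (\<tau> - s) (\<lambda>y. G (w s y)) x
          = exp (- (r + cM) * (\<tau> - s)) * (((cM - k) * exp (- (r + k) * s)) * P)" by (simp only: H1)
      also have "\<dots> = (exp (- (r + cM) * (\<tau> - s)) * exp (- (r + k) * s)) * ((cM - k) * P)" by (simp only: mult_ac)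
      also have "\<dots> = (E * exp ((cM - k) * s)) * ((cM - k) * P)" by (simp only: H2)
      also have "\<dots> = P * (cM - k) * E * exp ((cM - k) * s)" by (simp only: mult_ac)
      finally show ?thesis .
    qed
    have "(LINT s:{0..\<tau>}|lborel. exp (- (r + cM) * (\<tau> - s)) * heat_op \<sigma> \<rho> (\<tau> - s) (\<lambda>y. G (w s y)) x)
        = (LINT s:{0..\<tau>}|lborel. P * (cM - k) * E * exp ((cM - k) * s))"
      using pt by (intro set_lebesgue_integral_cong) auto
    also have "\<dots> = P * E * exp ((cM - k) * \<tau>) - P * E * exp ((cM - k) * 0)"
      using \<tau> by (intro ftc) (auto intro!: derivative_eq_intros continuous_intros simp: algebra_simps)
    also have "\<dots> = w \<tau> x - E * P"
    proof -
      have "E * exp ((cM - k) * \<tau>) = exp (- (r + k) * \<tau>)"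
        unfolding E_def exp_add[symmetric] by (simp add: algebra_simps)
      then show ?thesis unfolding w_def P_def by (simp add: algebra_simps)
    qed
    finally show "w \<tau> x = exp (- (r + cM) * \<tau>) * heat_op \<sigma> \<rho> \<tau> h x
      + (LINT s:{0..\<tau>}|lborel. exp (- (r + cM) * (\<tau> - s)) * heat_op \<sigma> \<rho> (\<tau> - s) (\<lambda>y. G (w s y)) x)"
      unfolding E_def P_def by simp
  qed
  define Au where "Au = (\<lambda>\<tau> x s. exp (- (r + cM) * (\<tau> - s)) * heat_op \<sigma> \<rho> (\<tau> - s) (\<lambda>y. G (u s y)) x)"
  define Aw where "Aw = (\<lambda>\<tau> x s. exp (- (r + cM) * (\<tau> - s)) * heat_op \<sigma> \<rho> (\<tau> - s) (\<lambda>y. G (w s y)) x)"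
  have rcM: "r + cM \<ge> 0" using r cM0 by simp
  have Auint: "\<And>\<tau> x. \<tau> \<in> {0..T} \<Longrightarrow> set_integrable lborel {0..\<tau>} (Au \<tau> x)"
    unfolding Au_def by (rule A_int[OF u_meas Gm Gb cM0 Cu _ rcM]) auto
  have Awint: "\<And>\<tau> x. \<tau> \<in> {0..T} \<Longrightarrow> set_integrable lborel {0..\<tau>} (Aw \<tau> x)"
    unfolding Aw_def by (rule A_int[OF wm Gm Gb cM0 wb _ rcM]) auto
  have usol: "\<And>\<tau> x. \<tau> \<in> {0..T} \<Longrightarrow> u \<tau> x = exp (- (r + cM) * \<tau>) * heat_op \<sigma> \<rho> \<tau> h x
      + (LINT s:{0..\<tau>}|lborel. Au \<tau> x s)"
    using u_sol unfolding mild_solution_def Au_def G_def h_def \<rho>_def by blast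
  have dsol: "\<And>\<tau> x. \<tau> \<in> {0..T} \<Longrightarrow> u \<tau> x - w \<tau> x = (LINT s:{0..\<tau>}|lborel. Au \<tau> x s - Aw \<tau> x s)"
  proof -
    fix \<tau> x assume \<tau>: "\<tau> \<in> {0..T}"
    have "u \<tau> x - w \<tau> x = (LINT s:{0..\<tau>}|lborel. Au \<tau> x s) - (LINT s:{0..\<tau>}|lborel. Aw \<tau> x s)"
      using usol[OF \<tau>, of x] wsol[OF \<tau>, of x] unfolding Aw_def by simp
    also have "\<dots> = (LINT s:{0..\<tau>}|lborel. Au \<tau> x s - Aw \<tau> x s)"
      by (rule set_integral_diff(2)[symmetric, OF Auint[OF \<tau>] Awint[OF \<tau>]])
    finally show "u \<tau> x - w \<tau> x = (LINT s:{0..\<tau>}|lborel. Au \<tau> x s - Aw \<tau> x s)" .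
  qed
  define M where "M = Cu + Ch * C1"
  define L where "L = cM * C1"
  have ind: "\<forall>\<tau>\<in>{0..T}. \<forall>x. \<bar>u \<tau> x - w \<tau> x\<bar> \<le> M * (L * \<tau>) ^ n / fact n * (1 + exp x)" for n
  proof (induct n)
    case 0
    show ?case
    proof (intro ballI allI)
      fix \<tau> x assume \<tau>: "\<tau> \<in> {0..T}"
      have "\<bar>u \<tau> x - w \<tau> x\<bar> \<le> \<bar>u \<tau> x\<bar> + \<bar>w \<tau> x\<bar>" by (rule abs_triangle_ineq4)
      also have "\<dots> \<le> Cu * (1 + exp x) + (Ch * C1) * (1 + exp x)" using Cu[OF \<tau>] wb[OF \<tau>] by (rule add_mono)
      finally show "\<bar>u \<tau> x - w \<tau> x\<bar> \<le> M * (L * \<tau>) ^ 0 / fact 0 * (1 + exp x)"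
        unfolding M_def by (simp add: algebra_simps)
    qed
  next
    case (Suc n)
    show ?case
    proof (intro ballI allI)
      fix \<tau> x assume \<tau>: "\<tau> \<in> {0..T}"
      define B where "B = (\<lambda>s. M * (L * s) ^ n / fact n * L * (1 + exp x))"
      have pt: "\<bar>Au \<tau> x s - Aw \<tau> x s\<bar> \<le> B s" if s: "s \<in> {0..\<tau>}" for s
      proof -
        have sT: "s \<in> {0..T}" and tsT: "\<tau> - s \<in> {0..T}" using s \<tau> by auto
        have e1: "exp (- (r + cM) * (\<tau> - s)) \<le> 1"
        proof -
          have "0 \<le> (r + cM) * (\<tau> - s)" using s rcM by (intro mult_nonneg_nonneg) auto
          then show ?thesis by (simp add: algebra_simps)
        qed
        have gu: "\<bar>G (u s y)\<bar> \<le> (cM * Cu) * (1 + exp y)" for y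
          using order_trans[OF Gb mult_left_mono[OF Cu[OF sT] cM0]] by (simp add: mult.assoc)
        have gw: "\<bar>G (w s y)\<bar> \<le> (cM * (Ch * C1)) * (1 + exp y)" for y
          using order_trans[OF Gb mult_left_mono[OF wb[OF sT] cM0]] by (simp add: mult.assoc)
        have diff: "heat_op \<sigma> \<rho> (\<tau> - s) (\<lambda>y. G (u s y)) x - heat_op \<sigma> \<rho> (\<tau> - s) (\<lambda>y. G (w s y)) x
            = heat_op \<sigma> \<rho> (\<tau> - s) (\<lambda>y. G (u s y) - G (w s y)) x"
          using tsT by (intro heat_diff[OF _ gu _ gw]) auto
        have gd: "\<bar>G (u s y) - G (w s y)\<bar> \<le> (cM * (M * (L * s) ^ n / fact n)) * (1 + exp y)" for y
        proof -
          have "\<bar>G (u s y) - G (w s y)\<bar> \<le> cM * \<bar>u s y - w s y\<bar>" by (rule Glip)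
          also have "\<dots> \<le> cM * (M * (L * s) ^ n / fact n * (1 + exp y))"
            using Suc sT cM0 by (intro mult_left_mono) auto
          finally show ?thesis by (simp add: mult.assoc)
        qed
        have "\<bar>Au \<tau> x s - Aw \<tau> x s\<bar> = exp (- (r + cM) * (\<tau> - s)) * \<bar>heat_op \<sigma> \<rho> (\<tau> - s) (\<lambda>y. G (u s y) - G (w s y)) x\<bar>"
          unfolding Au_def Aw_def diff[symmetric] by (simp add: right_diff_distrib[symmetric] abs_mult)
        also have "\<dots> \<le> 1 * \<bar>heat_op \<sigma> \<rho> (\<tau> - s) (\<lambda>y. G (u s y) - G (w s y)) x\<bar>"
          using e1 by (intro mult_right_mono) auto
        also have "\<dots> \<le> (cM * (M * (L * s) ^ n / fact n)) * C1 * (1 + exp x)" unfolding C1_def using heat_bound2[OF tsT gd] by simp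
        also have "\<dots> = B s" unfolding B_def L_def by (simp add: mult_ac)
        finally show ?thesis .
      qed
      have Bint: "set_integrable lborel {0..\<tau>} B" unfolding B_def
        by (rule borel_integrable_atLeastAtMost') (intro continuous_intros, simp)
      have "\<bar>u \<tau> x - w \<tau> x\<bar> \<le> (LINT s:{0..\<tau>}|lborel. B s)"
        unfolding dsol[OF \<tau>] set_lebesgue_integral_def
      proof (rule abs_LINT_le)
        show "integrable lborel (\<lambda>s. indicator {0..\<tau>} s *\<^sub>R B s)" using Bint unfolding set_integrable_def .
        fix s
        show "\<bar>indicator {0..\<tau>} s *\<^sub>R (Au \<tau> x s - Aw \<tau> x s)\<bar> \<le> indicator {0..\<tau>} s *\<^sub>R B s"
          using pt[of s] by (auto simp: indicator_def)
      qed
      also have "\<dots> = M * (1 + exp x) * L ^ Suc n / fact (Suc n) * \<tau> ^ Suc n - M * (1 + exp x) * L ^ Suc n / fact (Suc n) * 0 ^ Suc n"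
      proof (rule ftc)
        show "0 \<le> \<tau>" using \<tau> by simp
        show "continuous_on {0..\<tau>} B" unfolding B_def by (intro continuous_intros, simp)
        fix s
        have "B s = M * (1 + exp x) * L ^ Suc n / fact (Suc n) * (of_nat (Suc n) * s ^ n)"
        proof -
          have f: "fact (Suc n) = (1 + real n) * (fact n :: real)" by simp
          have fp: "fact n > (0::real)" by simp
          have f0: "fact n \<noteq> (0::real)" "1 + real n \<noteq> 0" "fact n + fact n * real n \<noteq> 0"
          proof -
            show "fact n \<noteq> (0::real)" using fp by simp
            show "1 + real n \<noteq> 0" by simp
            have "fact n * real n \<ge> 0" using fp by simp
            then show "fact n + fact n * real n \<noteq> 0" using fp by linarith
          qed
          show ?thesis unfolding B_def f using f0 by (simp add: power_mult_distrib field_simps)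
        qed
        moreover have "((\<lambda>s. s ^ Suc n) has_real_derivative (of_nat (Suc n) * s ^ n)) (at s)"
          using DERIV_pow[of "Suc n" s UNIV] by simp
        ultimately show "((\<lambda>s. M * (1 + exp x) * L ^ Suc n / fact (Suc n) * s ^ Suc n) has_real_derivative B s) (at s)"
          by (metis DERIV_cmult)
      qed
      also have "\<dots> = M * (L * \<tau>) ^ Suc n / fact (Suc n) * (1 + exp x)"
        by (simp add: power_mult_distrib)
      finally show "\<bar>u \<tau> x - w \<tau> x\<bar> \<le> M * (L * \<tau>) ^ Suc n / fact (Suc n) * (1 + exp x)" .
    qed
  qed
  have uw: "u \<tau> x = w \<tau> x" if \<tau>: "\<tau> \<in> {0..T}" for \<tau> x
  proof -
    have lim: "(\<lambda>n. M * (1 + exp x) * ((L * \<tau>) ^ n / fact n)) \<longlonglongrightarrow> M * (1 + exp x) * 0"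
      by (intro tendsto_mult tendsto_const pow_fact_zero)
    have "\<bar>u \<tau> x - w \<tau> x\<bar> \<le> M * (1 + exp x) * 0"
    proof (rule LIMSEQ_le_const[OF lim])
      show "\<exists>N. \<forall>n\<ge>N. \<bar>u \<tau> x - w \<tau> x\<bar> \<le> M * (1 + exp x) * ((L * \<tau>) ^ n / fact n)"
      proof (intro exI allI impI)
        fix n :: nat
        have "\<bar>u \<tau> x - w \<tau> x\<bar> \<le> M * (L * \<tau>) ^ n / fact n * (1 + exp x)" using ind \<tau> by blast
        also have "\<dots> = M * (1 + exp x) * ((L * \<tau>) ^ n / fact n)" by simp
        finally show "\<bar>u \<tau> x - w \<tau> x\<bar> \<le> M * (1 + exp x) * ((L * \<tau>) ^ n / fact n)" .
      qed
    qed
    then show ?thesis by simp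
  qed
  show ?thesis
  proof (intro ballI allI impI)
    fix t S :: real assume t: "t \<in> {0..T}" and S: "S > 0"
    have \<tau>: "T - t \<in> {0..T}" using t by auto
    have fe: "(\<lambda>z. H (S * exp ((qS - \<gamma>S - \<sigma>^2 / 2) * (T - t) + \<sigma> * sqrt (T - t) * z)) * Defs.std_normal_density z)
        = (\<lambda>z. h (ln S + \<rho> * (T - t) + \<sigma> * sqrt (T - t) * z) * Defs.std_normal_density z)"
      by (rule ext) (simp add: h_def \<rho>_def exp_add S mult.assoc)
    have bs: "bs_price T r \<sigma> qS \<gamma>S H t S = exp (- r * (T - t)) * heat_op \<sigma> \<rho> (T - t) h (ln S)"
      unfolding bs_price_def heat_op_def fe ..
    have "u (T - t) (ln S) = w (T - t) (ln S)" by (rule uw[OF \<tau>])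
    moreover have "w (T - t) (ln S) = exp (- k * (T - t)) * bs_price T r \<sigma> qS \<gamma>S H t S"
      unfolding bs w_def by (simp add: exp_add[symmetric] algebra_simps)
    ultimately show "u (T - t) (ln S) \<ge> 0 \<and>
           u (T - t) (ln S) = exp (- ((1 - RC) * lamC + sF) * (T - t)) * bs_price T r \<sigma> qS \<gamma>S H t S"
      using wn[of "T - t" "ln S"] unfolding k_def by simp
  qed
qed

end
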